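(* Let $H=(V,E)$ be an $n$-uniform hypergraph, $r\ge 2$, let $A\in E$ and let $2\le k\le r$. The number of sequences $(C_1,\dots,C_{k-1})$ of edges of $H$ for which there exist an injective $\sigma:V\to[0,1)$ and sets $V_i\subseteq\Delta_i$ ($i=1,\dots,r-1$) such that $(C_1,\dots,C_{k-1},A)$ is a $k$-complex ordered chain is at most $2\binom{|E|}{k-1}$.
   Context: Colors are $\{1,\dots,r\}$. Put $p=\frac{r-1}{r}\cdot\frac{\ln(n/\ln n)}{n}$. Partition $[0,1)$ into consecutive half-open intervals $\Delta_1,\delta_1,\Delta_2,\dots,\delta_{r-1},\Delta_r$ (left to right), $\Delta_i=\big[(i-1)(\tfrac{1-p}{r}+\tfrac{p}{r-1}),\ i\tfrac{1-p}{r}+(i-1)\tfrac{p}{r-1}\big)$, $\delta_i=\big[i\tfrac{1-p}{r}+(i-1)\tfrac{p}{r-1},\ i(\tfrac{1-p}{r}+\tfrac{p}{r-1})\big)$. For injective $\sigma:V\to[0,1)$, a vertex $v$ belongs to interval $I$ if $\sigma(v)\in I$ (and $\Delta_i$ also denotes the set of vertices belonging to it); the first (last) vertex of a vertex set is its vertex of smallest (largest) weight. Algorithm 1: every vertex in $\Delta_i$ gets color $i$; then vertices in $\bigcup_i\delta_i$ are processed in increasing weight order, and $v\in\delta_i$ gets color $i$ unless some edge containing $v$ has all its other vertices already colored $i$, in which case $v$ gets color $i+1$; the result is $C^0$. For $1\le k\le r$, a sequence $(C_1,\dots,C_{k-1},D)$ with $C_j$ edges and $D$ a nonempty vertex set satisfies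 the ordered $k$-chain conditions for color $r$ if: (a) the first vertex of $C_1$ (of $D$ if $k=1$) lies in $\Delta_{r-k+1}$; (b) for each $j=1,\dots,k-1$, with $C_k:=D$, the last vertex of $C_j$ equals the first vertex of $C_{j+1}$, lies in $\delta_{r-k+j}$, and all other vertices of $C_j$ have color $r-k+j$ in $C^0$; (c) all vertices of $D$ have color $r$ in $C^0$. Given sets $V_i\subseteq\Delta_i$, $i=1,\dots,r-1$, and $k\ge2$, a sequence $(C_1,\dots,C_{k-1},A)$ of edges is a $k$-complex ordered chain if, with $A'=A\cap(\delta_{r-1}\cup\Delta_r)$ (vertices of $A$ belonging to $\delta_{r-1}\cup\Delta_r$): (1) $(C_1,\dots,C_{k-1},A')$ satisfies the ordered $k$-chain conditions for color $r$; (2) every vertex of $A\setminus A'$ lies in $\bigcup_{i=1}^{r-1}V_i$; (3) for $j=1,\dots,k-2$, every vertex of $A\cap C_j$ lies in $V_{r-k+j}$; (4) every vertex of $(A\setminus A')\cap C_{k-1}$ lies in $V_{r-1}$. *)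

theory Defs
  imports Main Complex_Main
begin

definition pval :: "nat \<Rightarrow> nat \<Rightarrow> real" where
  "pval n r = (real r - 1) / real r * ln (real n / ln (real n)) / real n"

definition DeltaI :: "nat \<Rightarrow> nat \<Rightarrow> nat \<Rightarrow> real set" where
  "DeltaI n r i = (let p = pval n r in
     {(real i - 1) * ((1 - p) / real r + p / (real r - 1)) ..<
      real i * (1 - p) / real r + (real i - 1) * p / (real r - 1)})"

definition deltaI :: "nat \<Rightarrow> nat \<Rightarrow> nat \<Rightarrow> real set" where
  "deltaI n r i = (let p = pval n r in
     {real i * (1 - p) / real r + (real i - 1) * p / (real r - 1) ..<
      real i * ((1 - p) / real r + p / (real r - 1))})"

text \<open>A vertex u is already coloured when v is processed: u lies in some Delta_j
  (these are coloured first) or u has smaller weight than v.\<close>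
definition alg1_rule ::
  "'a set \<Rightarrow> 'a set set \<Rightarrow> ('a \<Rightarrow> real) \<Rightarrow> nat \<Rightarrow> nat \<Rightarrow> ('a \<Rightarrow> nat) \<Rightarrow> bool" where
  "alg1_rule V E \<sigma> n r c \<longleftrightarrow>
     (\<forall>v. v \<notin> V \<longrightarrow> c v = 0) \<and>
     (\<forall>v\<in>V. \<forall>i\<in>{1..r}. \<sigma> v \<in> DeltaI n r i \<longrightarrow> c v = i) \<and>
     (\<forall>v\<in>V. \<forall>i\<in>{1..r-1}. \<sigma> v \<in> deltaI n r i \<longrightarrow>
        c v = (if (\<exists>e\<in>E. v \<in> e \<and>
                     (\<forall>u\<in>e - {v}. ((\<exists>j\<in>{1..r}. \<sigma> u \<in> DeltaI n r j) \<or> \<sigma> u < \<sigma> v)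
                                   \<and> c u = i))
               then i + 1 else i))"

definition C0 :: "'a set \<Rightarrow> 'a set set \<Rightarrow> ('a \<Rightarrow> real) \<Rightarrow> nat \<Rightarrow> nat \<Rightarrow> 'a \<Rightarrow> nat" where
  "C0 V E \<sigma> n r = (THE c. alg1_rule V E \<sigma> n r c)"

definition firstv :: "('a \<Rightarrow> real) \<Rightarrow> 'a set \<Rightarrow> 'a" where
  "firstv \<sigma> S = (THE v. v \<in> S \<and> (\<forall>u\<in>S. \<sigma> v \<le> \<sigma> u))"

definition lastv :: "('a \<Rightarrow> real) \<Rightarrow> 'a set \<Rightarrow> 'a" where
  "lastv \<sigma> S = (THE v. v \<in> S \<and> (\<forall>u\<in>S. \<sigma> u \<le> \<sigma> v))"

text \<open>C j for j = 1..k-1 are the edges C_1..C_{k-1}; D is the final vertex set.\<close>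
definition ordered_chain ::
  "'a set \<Rightarrow> 'a set set \<Rightarrow> ('a \<Rightarrow> real) \<Rightarrow> nat \<Rightarrow> nat \<Rightarrow> nat \<Rightarrow> (nat \<Rightarrow> 'a set) \<Rightarrow> 'a set \<Rightarrow> bool" where
  "ordered_chain V E \<sigma> n r k C D \<longleftrightarrow>
     (let C' = (\<lambda>j. if j = k then D else C j); c = C0 V E \<sigma> n r in
       D \<noteq> {} \<and>
       \<sigma> (firstv \<sigma> (C' 1)) \<in> DeltaI n r (r - k + 1) \<and>
       (\<forall>j\<in>{1..k-1}.
          lastv \<sigma> (C' j) = firstv \<sigma> (C' (j + 1)) \<and>
          \<sigma> (lastv \<sigma> (C' j)) \<in> deltaI n r (r - k + j) \<and>
          (\<forall>u \<in> C' j - {lastv \<sigma> (C' j)}. c u = r - k + j)) \<and>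
       (\<forall>u\<in>D. c u = r))"

definition complex_chain ::
  "'a set \<Rightarrow> 'a set set \<Rightarrow> ('a \<Rightarrow> real) \<Rightarrow> nat \<Rightarrow> nat \<Rightarrow> (nat \<Rightarrow> 'a set) \<Rightarrow> nat
     \<Rightarrow> (nat \<Rightarrow> 'a set) \<Rightarrow> 'a set \<Rightarrow> bool" where
  "complex_chain V E \<sigma> n r Vs k C A \<longleftrightarrow>
     (let A' = {v\<in>A. \<sigma> v \<in> deltaI n r (r - 1) \<union> DeltaI n r r} in
       ordered_chain V E \<sigma> n r k C A' \<and>
       (\<forall>v\<in>A - A'. v \<in> (\<Union>i\<in>{1..r-1}. Vs i)) \<and>
       (\<forall>j\<in>{1..k-2}. \<forall>v\<in>A \<inter> C j. v \<in> Vs (r - k + j)) \<and>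
       (\<forall>v\<in>(A - A') \<inter> C (k - 1). v \<in> Vs (r - 1)))"

end

theory Submission
  imports Defs
begin

definition induced :: "'b set list \<Rightarrow> bool" where
  "induced xs \<longleftrightarrow> distinct xs \<and>
     (\<forall>i<length xs. \<forall>j<length xs. (xs!i \<inter> xs!j \<noteq> {}) = (i \<le> Suc j \<and> j \<le> Suc i))"

lemma induced_tl: "induced (x#xs) \<Longrightarrow> induced xs"
  unfolding induced_def
proof (intro conjI allI impI)
  assume h: "distinct (x # xs) \<and> (\<forall>i<length (x # xs). \<forall>j<length (x # xs).
        ((x # xs) ! i \<inter> (x # xs) ! j \<noteq> {}) = (i \<le> Suc j \<and> j \<le> Suc i))"
  then show "distinct xs" by simp
  fix i j assume "i < length xs" "j < length xs"
  moreover have "\<forall>i<length (x # xs). \<forall>j<length (x # xs).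
        ((x # xs) ! i \<inter> (x # xs) ! j \<noteq> {}) = (i \<le> Suc j \<and> j \<le> Suc i)" using h by blast
  ultimately have "((x # xs) ! Suc i \<inter> (x # xs) ! Suc j \<noteq> {}) = (Suc i \<le> Suc (Suc j) \<and> Suc j \<le> Suc (Suc i))"
    by (metis Suc_less_eq length_Cons)
  then show "(xs ! i \<inter> xs ! j \<noteq> {}) = (i \<le> Suc j \<and> j \<le> Suc i)" by simp
qed

lemma induced_next:
  assumes "induced (x#y#zs)" "w \<in> set (y#zs)" "x \<inter> w \<noteq> {}"
  shows "w = y"
proof -
  obtain t where t: "t < length (y#zs)" "w = (y#zs)!t" using assms(2) by (metis in_set_conv_nth)
  have "((x#y#zs)!0 \<inter> (x#y#zs)!(Suc t) \<noteq> {}) = (0 \<le> Suc (Suc t) \<and> Suc t \<le> Suc 0)"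
    using assms(1) t(1) unfolding induced_def by (metis length_Cons not_less_eq zero_less_Suc)
  then have "t = 0" using assms(3) t by simp
  then show ?thesis using t by simp
qed

lemma induced_uniq:
  "induced xs \<Longrightarrow> induced ys \<Longrightarrow> set xs = set ys \<Longrightarrow> xs \<noteq> [] \<Longrightarrow> hd xs = hd ys \<Longrightarrow> xs = ys"
proof (induction xs arbitrary: ys)
  case Nil
  then show ?case by simp
next
  case (Cons x xs')
  obtain ys' where ys: "ys = x # ys'"
    using Cons.prems by (cases ys) auto
  have d1: "distinct (x#xs')" using Cons.prems(1) unfolding induced_def by blast
  have d2: "distinct (x#ys')" using Cons.prems(2) ys unfolding induced_def by blast
  have st: "set xs' = set ys'" using d1 d2 Cons.prems(3) ys by auto
  show ?case
  proof (cases xs')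
    case Nil
    then show ?thesis using st ys by simp
  next
    case (Cons y zs)
    obtain y' zs' where ys': "ys' = y' # zs'" using st Cons by (cases ys') auto
    have H: "\<forall>i<length (x#xs'). \<forall>j<length (x#xs'). ((x#xs')!i \<inter> (x#xs')!j \<noteq> {}) = (i \<le> Suc j \<and> j \<le> Suc i)"
      using Cons.prems(1) unfolding induced_def by blast
    have "((x#xs')!0 \<inter> (x#xs')!1 \<noteq> {}) = (0 \<le> Suc 1 \<and> 1 \<le> Suc 0)"
      using H[rule_format, of 0 1] \<open>xs' = y # zs\<close> by simp
    then have "(x#xs')!0 \<inter> (x#xs')!1 \<noteq> {}" by simp
    then have "x \<inter> y \<noteq> {}" using \<open>xs' = y # zs\<close> by simp
    moreover have "y \<in> set (y'#zs')" using st Cons ys' by auto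
    ultimately have "y = y'" using induced_next[of x y' zs' y] Cons.prems(2) ys ys' by simp
    have i1: "induced xs'" using induced_tl Cons.prems(1) by blast
    have i2: "induced ys'" using induced_tl Cons.prems(2) ys by blast
    have "xs' = ys'"
      using Cons.IH[OF i1 i2 st] \<open>y = y'\<close> \<open>xs' = y # zs\<close> ys' by simp
    then show ?thesis using ys by simp
  qed
qed

lemma induced_rev: "induced xs \<Longrightarrow> induced (rev xs)"
  unfolding induced_def
proof (intro conjI allI impI)
  assume h: "distinct xs \<and> (\<forall>i<length xs. \<forall>j<length xs. (xs ! i \<inter> xs ! j \<noteq> {}) = (i \<le> Suc j \<and> j \<le> Suc i))"
  then show "distinct (rev xs)" by simp
  fix i j assume ij: "i < length (rev xs)" "j < length (rev xs)"
  then have "length xs - Suc i < length xs" "length xs - Suc j < length xs" by auto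
  then have "(xs ! (length xs - Suc i) \<inter> xs ! (length xs - Suc j) \<noteq> {})
     = (length xs - Suc i \<le> Suc (length xs - Suc j) \<and> length xs - Suc j \<le> Suc (length xs - Suc i))"
    using h[THEN conjunct2, rule_format, of "length xs - Suc i" "length xs - Suc j"] by blast
  also have "\<dots> = (i \<le> Suc j \<and> j \<le> Suc i)" using ij by auto
  finally show "(rev xs ! i \<inter> rev xs ! j \<noteq> {}) = (i \<le> Suc j \<and> j \<le> Suc i)"
    using ij by (simp add: rev_nth)
qed

lemma induced_ends:
  assumes "induced xs" "induced ys" "set xs = set ys" "xs \<noteq> []"
  shows "hd ys = hd xs \<or> hd ys = last xs"
proof (rule ccontr)
  assume nc: "\<not> (hd ys = hd xs \<or> hd ys = last xs)"
  have dx: "distinct xs" and dy: "distinct ys" using assms(1,2) unfolding induced_def by blast+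
  have Hx: "\<forall>i<length xs. \<forall>j<length xs. (xs!i \<inter> xs!j \<noteq> {}) = (i \<le> Suc j \<and> j \<le> Suc i)"
    using assms(1) unfolding induced_def by blast
  have Hy: "\<forall>i<length ys. \<forall>j<length ys. (ys!i \<inter> ys!j \<noteq> {}) = (i \<le> Suc j \<and> j \<le> Suc i)"
    using assms(2) unfolding induced_def by blast
  have yne: "ys \<noteq> []" using assms(3,4) by auto
  have "hd ys \<in> set xs" using assms(3) yne by simp
  then obtain a where a: "a < length xs" "hd ys = xs!a" by (metis in_set_conv_nth)
  have y0: "ys!0 = xs!a" using a(2) yne by (simp add: hd_conv_nth)
  have "a \<noteq> 0"
  proof
    assume "a = 0"
    then have "hd ys = hd xs" using a(2) assms(4) by (simp add: hd_conv_nth)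
    then show False using nc by simp
  qed
  moreover have "a \<noteq> length xs - 1"
  proof
    assume "a = length xs - 1"
    then have "hd ys = last xs" using a(2) assms(4) by (simp add: last_conv_nth)
    then show False using nc by simp
  qed
  ultimately have a1: "0 < a" "a + 1 < length xs" using a(1) by auto
  have key: "xs!p = ys!1" if p: "p < length xs" "p \<noteq> a" "xs!p \<inter> xs!a \<noteq> {}" for p
  proof -
    have "xs!p \<in> set xs" by (rule nth_mem[OF p(1)])
    then have "xs!p \<in> set ys" using assms(3) by simp
    then obtain b where b: "b < length ys" "xs!p = ys!b" by (metis in_set_conv_nth)
    have "b \<noteq> 0"
    proof
      assume "b = 0"
      then have "xs!p = xs!a" using b(2) y0 by simp
      then have "p = a" using nth_eq_iff_index_eq[OF dx p(1) a(1)] by simp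
      then show False using p(2) by simp
    qed
    moreover have "(ys!b \<inter> ys!0 \<noteq> {}) = (b \<le> Suc 0 \<and> 0 \<le> Suc b)"
      using Hy[rule_format, of b 0] b(1) yne by simp
    ultimately have "b = 1" using b(2) y0 p(3) by simp
    then show "xs!p = ys!1" using b(2) by simp
  qed
  have "(xs!(a-1) \<inter> xs!a \<noteq> {}) = (a - 1 \<le> Suc a \<and> a \<le> Suc (a-1))"
    using Hx[rule_format, of "a-1" a] a(1) by simp
  then have e1: "xs!(a-1) = ys!1" using key[of "a-1"] a(1) a1 by simp
  have "(xs!(a+1) \<inter> xs!a \<noteq> {}) = (a + 1 \<le> Suc a \<and> a \<le> Suc (a+1))"
    using Hx[rule_format, of "a+1" a] a(1) a1 by simp
  then have e2: "xs!(a+1) = ys!1" using key[of "a+1"] a1 by simp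
  have "xs!(a-1) = xs!(a+1)" using e1 e2 by simp
  then have "a - 1 = a + 1" using nth_eq_iff_index_eq[OF dx, of "a-1" "a+1"] a(1) a1 by simp
  then show False using a1 by simp
qed

lemma induced_fiber:
  assumes "induced xs" "induced ys" "set xs = set ys"
  shows "ys = xs \<or> ys = rev xs"
proof (cases "xs = []")
  case True
  then show ?thesis using assms by simp
next
  case False
  have yne: "ys \<noteq> []" using assms(3) False by auto
  from induced_ends[OF assms False] show ?thesis
  proof
    assume "hd ys = hd xs"
    then show ?thesis using induced_uniq[OF assms(1,2,3) False] by simp
  next
    assume "hd ys = last xs"
    then have "hd (rev xs) = hd ys" using False by (simp add: hd_rev)
    then show ?thesis using induced_uniq[OF induced_rev[OF assms(1)] assms(2)] assms(3) False by simp
  qed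
qed

lemma count_induced:
  assumes fE: "finite E"
  shows "card {xs. length xs = m \<and> set xs \<subseteq> E \<and> induced xs} \<le> 2 * (card E choose m)"
proof -
  define S where "S = {xs. length xs = m \<and> set xs \<subseteq> E \<and> induced xs}"
  have fS: "finite S" unfolding S_def
    by (rule finite_subset[OF _ finite_lists_length_eq[OF fE, of m]]) auto
  have img: "set ` S \<subseteq> {T. T \<subseteq> E \<and> card T = m}"
  proof
    fix T assume "T \<in> set ` S"
    then obtain xs where xs: "xs \<in> S" "T = set xs" by blast
    then have "distinct xs" "length xs = m" "set xs \<subseteq> E" unfolding S_def induced_def by blast+
    then show "T \<in> {T. T \<subseteq> E \<and> card T = m}" using xs(2) distinct_card by fastforce
  qed
  have cimg: "card (set ` S) \<le> card E choose m"
    using card_mono[OF _ img] fE by (simp add: n_subsets)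
  have U: "S = (\<Union>T\<in>set ` S. {xs\<in>S. set xs = T})" by auto
  have fib: "card {xs\<in>S. set xs = T} \<le> 2" if T: "T \<in> set ` S" for T
  proof -
    obtain xs0 where x0: "xs0 \<in> S" "T = set xs0" using T by blast
    have "{xs\<in>S. set xs = T} \<subseteq> {xs0, rev xs0}"
    proof
      fix xs assume "xs \<in> {xs\<in>S. set xs = T}"
      then show "xs \<in> {xs0, rev xs0}" using induced_fiber[of xs0 xs] x0 unfolding S_def by auto
    qed
    then have "card {xs\<in>S. set xs = T} \<le> card {xs0, rev xs0}" by (intro card_mono) auto
    also have "\<dots> \<le> 2" by (simp add: card_insert_le_m1)
    finally show ?thesis .
  qed
  have "card S \<le> (\<Sum>T\<in>set ` S. card {xs\<in>S. set xs = T})"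
    by (subst U) (rule card_UN_le, use fS in simp)
  also have "\<dots> \<le> (\<Sum>T\<in>set ` S. 2)" by (rule sum_mono) (use fib in auto)
  also have "\<dots> = 2 * card (set ` S)" by simp
  also have "\<dots> \<le> 2 * (card E choose m)" using cimg by simp
  finally show ?thesis unfolding S_def .
qed

lemma col_arith: "(x::nat) = d + (i+1) \<or> x = d + (i+2) \<Longrightarrow> x = d + (j+1) \<or> x = d + (j+2) \<Longrightarrow> i + 2 \<le> j \<Longrightarrow> False"
  by auto

lemma col_arith2: "(x::nat) = d + (j+1) \<or> x = d + (j+2) \<Longrightarrow> x = d + (i+1) \<Longrightarrow> i < j \<Longrightarrow> False"
  by auto

lemma firstv_prop:
  assumes "finite S" "S \<noteq> {}" "inj_on \<sigma> S"
  shows "firstv \<sigma> S \<in> S \<and> (\<forall>u\<in>S. \<sigma> (firstv \<sigma> S) \<le> \<sigma> u)"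
proof -
  have "Min (\<sigma> ` S) \<in> \<sigma> ` S" using assms by simp
  then obtain v where v: "v \<in> S" "\<sigma> v = Min (\<sigma> ` S)" by auto
  have vm: "\<forall>u\<in>S. \<sigma> v \<le> \<sigma> u" using v assms(1) by simp
  have "firstv \<sigma> S = v" unfolding firstv_def
  proof (rule the_equality)
    show "v \<in> S \<and> (\<forall>u\<in>S. \<sigma> v \<le> \<sigma> u)" using v vm by simp
    fix w assume "w \<in> S \<and> (\<forall>u\<in>S. \<sigma> w \<le> \<sigma> u)"
    then have "w \<in> S" "\<sigma> w = \<sigma> v" using vm v by force+
    then show "w = v" using assms(3) v(1) by (meson inj_onD)
  qed
  then show ?thesis using v vm by simp
qed

lemma lastv_prop:
  assumes "finite S" "S \<noteq> {}" "inj_on \<sigma> S"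
  shows "lastv \<sigma> S \<in> S \<and> (\<forall>u\<in>S. \<sigma> u \<le> \<sigma> (lastv \<sigma> S))"
proof -
  have "Max (\<sigma> ` S) \<in> \<sigma> ` S" using assms by simp
  then obtain v where v: "v \<in> S" "\<sigma> v = Max (\<sigma> ` S)" by auto
  have vm: "\<forall>u\<in>S. \<sigma> u \<le> \<sigma> v" using v assms(1) by simp
  have "lastv \<sigma> S = v" unfolding lastv_def
  proof (rule the_equality)
    show "v \<in> S \<and> (\<forall>u\<in>S. \<sigma> u \<le> \<sigma> v)" using v vm by simp
    fix w assume "w \<in> S \<and> (\<forall>u\<in>S. \<sigma> u \<le> \<sigma> w)"
    then have "w \<in> S" "\<sigma> w = \<sigma> v" using vm v by force+
    then show "w = v" using assms(3) v(1) by (meson inj_onD)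
  qed
  then show ?thesis using v vm by simp
qed

lemma first_neq_last:
  assumes "finite S" "card S \<ge> 2" "inj_on \<sigma> S"
  shows "firstv \<sigma> S \<noteq> lastv \<sigma> S"
proof
  assume eq: "firstv \<sigma> S = lastv \<sigma> S"
  have ne: "S \<noteq> {}" using assms(2) by auto
  note f = firstv_prop[OF assms(1) ne assms(3)] and l = lastv_prop[OF assms(1) ne assms(3)]
  have "S \<subseteq> {firstv \<sigma> S}"
  proof
    fix u assume u: "u \<in> S"
    then have "\<sigma> u = \<sigma> (firstv \<sigma> S)" using f l eq by force
    then show "u \<in> {firstv \<sigma> S}" using assms(3) u f by (simp add: inj_on_eq_iff)
  qed
  then have "card S \<le> 1" using card_mono[of "{firstv \<sigma> S}" S] by simp
  then show False using assms(2) by simp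
qed

theorem lemma6:
  fixes V :: "'a set" and E :: "'a set set" and n r k :: nat and A :: "'a set"
  assumes "finite V" and "E \<subseteq> Pow V" and "\<forall>e\<in>E. card e = n"
    and "n \<ge> 2" and "r \<ge> 2" and "A \<in> E" and "2 \<le> k" and "k \<le> r"
  shows "card {Cs :: 'a set list. length Cs = k - 1 \<and> set Cs \<subseteq> E \<and>
            (\<exists>(\<sigma> :: 'a \<Rightarrow> real) (Vs :: nat \<Rightarrow> 'a set).
               inj_on \<sigma> V \<and> \<sigma> ` V \<subseteq> {0..<1} \<and>
               (\<forall>i\<in>{1..r-1}. Vs i \<subseteq> {v\<in>V. \<sigma> v \<in> DeltaI n r i}) \<and>
               complex_chain V E \<sigma> n r Vs k (\<lambda>j. Cs ! (j - 1)) A)}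
         \<le> 2 * (card E choose (k - 1))"
proof -
  have fE: "finite E" using assms(1,2) by (meson finite_Pow_iff finite_subset)
  have sub: "{Cs :: 'a set list. length Cs = k - 1 \<and> set Cs \<subseteq> E \<and>
            (\<exists>(\<sigma> :: 'a \<Rightarrow> real) (Vs :: nat \<Rightarrow> 'a set).
               inj_on \<sigma> V \<and> \<sigma> ` V \<subseteq> {0..<1} \<and>
               (\<forall>i\<in>{1..r-1}. Vs i \<subseteq> {v\<in>V. \<sigma> v \<in> DeltaI n r i}) \<and>
               complex_chain V E \<sigma> n r Vs k (\<lambda>j. Cs ! (j - 1)) A)}
     \<subseteq> {xs. length xs = k - 1 \<and> set xs \<subseteq> E \<and> induced xs}"
  proof
    fix Cs assume "Cs \<in> {Cs :: 'a set list. length Cs = k - 1 \<and> set Cs \<subseteq> E \<and>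
            (\<exists>(\<sigma> :: 'a \<Rightarrow> real) (Vs :: nat \<Rightarrow> 'a set).
               inj_on \<sigma> V \<and> \<sigma> ` V \<subseteq> {0..<1} \<and>
               (\<forall>i\<in>{1..r-1}. Vs i \<subseteq> {v\<in>V. \<sigma> v \<in> DeltaI n r i}) \<and>
               complex_chain V E \<sigma> n r Vs k (\<lambda>j. Cs ! (j - 1)) A)}"
    then obtain \<sigma> Vs where len: "length Cs = k - 1" and sE: "set Cs \<subseteq> E"
      and inj: "inj_on \<sigma> V" and cc: "complex_chain V E \<sigma> n r Vs k (\<lambda>j. Cs ! (j - 1)) A"
      by blast
    define A' where "A' = {v\<in>A. \<sigma> v \<in> deltaI n r (r - 1) \<union> DeltaI n r r}"
    define c where "c = C0 V E \<sigma> n r"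
    have oc: "ordered_chain V E \<sigma> n r k (\<lambda>j. Cs ! (j - 1)) A'"
      using cc unfolding complex_chain_def Let_def A'_def by blast
    have A'ne: "A' \<noteq> {}" and cA': "\<forall>u\<in>A'. c u = r"
      and chain: "\<forall>j\<in>{1..k-1}.
          lastv \<sigma> (if j = k then A' else Cs ! (j - 1)) = firstv \<sigma> (if j + 1 = k then A' else Cs ! (j + 1 - 1)) \<and>
          (\<forall>u \<in> (if j = k then A' else Cs ! (j - 1)) - {lastv \<sigma> (if j = k then A' else Cs ! (j - 1))}. c u = r - k + j)"
      using oc unfolding ordered_chain_def Let_def c_def by auto
    have F1: "lastv \<sigma> (Cs!i) = firstv \<sigma> (if i + 2 = k then A' else Cs!(i+1))"
      and F3: "\<forall>u\<in>Cs!i - {lastv \<sigma> (Cs!i)}. c u = r - k + (i + 1)" if "i < k - 1" for i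
    proof -
      have "Suc i \<in> {1..k-1}" "Suc i \<noteq> k" using that by auto
      then show "lastv \<sigma> (Cs!i) = firstv \<sigma> (if i + 2 = k then A' else Cs!(i+1))"
        "\<forall>u\<in>Cs!i - {lastv \<sigma> (Cs!i)}. c u = r - k + (i + 1)"
        using chain[rule_format, of "Suc i"] by auto
    qed
    have CE: "Cs!i \<in> E" if "i < k - 1" for i using nth_mem[of i Cs] that len sE by auto
    have CV: "Cs!i \<subseteq> V" if "i < k - 1" for i using CE[OF that] assms(2) by auto
    have Cfin: "finite (Cs!i)" if "i < k - 1" for i using finite_subset[OF CV[OF that] assms(1)] .
    have Ccard: "card (Cs!i) \<ge> 2" if "i < k - 1" for i using CE[OF that] assms(3,4) by simp
    have Cne: "Cs!i \<noteq> {}" if "i < k - 1" for i using Ccard[OF that] by auto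
    have Cinj: "inj_on \<sigma> (Cs!i)" if "i < k - 1" for i using inj_on_subset[OF inj CV[OF that]] .
    have A'V: "A' \<subseteq> V" using assms(2,6) unfolding A'_def by blast
    have A'fin: "finite A'" using finite_subset[OF A'V assms(1)] .
    have A'inj: "inj_on \<sigma> A'" using inj_on_subset[OF inj A'V] .
    have lastin: "lastv \<sigma> (Cs!i) \<in> Cs!i" if "i < k - 1" for i
      using lastv_prop[OF Cfin[OF that] Cne[OF that] Cinj[OF that]] by blast
    have colb: "c u = r - k + (i + 1) \<or> c u = r - k + (i + 2)" if "i < k - 1" "u \<in> Cs!i" for i u
    proof (cases "u = lastv \<sigma> (Cs!i)")
      case False
      then show ?thesis using F3[OF that(1)] that(2) by blast
    next
      case True
      show ?thesis
      proof (cases "i + 2 = k")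
        case True2: True
        have "u = firstv \<sigma> A'" using F1[OF that(1)] True True2 by simp
        then have "u \<in> A'" using firstv_prop[OF A'fin A'ne A'inj] by blast
        then have "c u = r" using cA' by blast
        then show ?thesis using True2 assms(8) by simp
      next
        case False2: False
        have i1: "i + 1 < k - 1" using that(1) False2 by simp
        have "u = firstv \<sigma> (Cs!(i+1))" using F1[OF that(1)] True False2 by simp
        moreover have "firstv \<sigma> (Cs!(i+1)) \<in> Cs!(i+1)"
          using firstv_prop[OF Cfin[OF i1] Cne[OF i1] Cinj[OF i1]] by blast
        moreover have "firstv \<sigma> (Cs!(i+1)) \<noteq> lastv \<sigma> (Cs!(i+1))"
          using first_neq_last[OF Cfin[OF i1] Ccard[OF i1] Cinj[OF i1]] .
        ultimately have "c u = r - k + (i + 1 + 1)" using F3[OF i1] by blast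
        then show ?thesis by simp
      qed
    qed
    have colex: "\<exists>u\<in>Cs!i. c u = r - k + (i + 1)" if "i < k - 1" for i
    proof -
      have "Cs!i - {lastv \<sigma> (Cs!i)} \<noteq> {}"
      proof
        assume "Cs!i - {lastv \<sigma> (Cs!i)} = {}"
        then have "Cs!i \<subseteq> {lastv \<sigma> (Cs!i)}" by blast
        then have "card (Cs!i) \<le> 1" using card_mono[of "{lastv \<sigma> (Cs!i)}" "Cs!i"] by simp
        then show False using Ccard[OF that] by simp
      qed
      then show ?thesis using F3[OF that] by blast
    qed
    have adj: "Cs!i \<inter> Cs!(i+1) \<noteq> {}" if "i + 1 < k - 1" for i
    proof -
      have i0: "i < k - 1" "i + 2 \<noteq> k" using that by auto
      have "lastv \<sigma> (Cs!i) = firstv \<sigma> (Cs!(i+1))" using F1[OF i0(1)] i0(2) by simp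
      moreover have "firstv \<sigma> (Cs!(i+1)) \<in> Cs!(i+1)"
        using firstv_prop[OF Cfin[OF that] Cne[OF that] Cinj[OF that]] by blast
      ultimately show ?thesis using lastin[OF i0(1)] by (metis IntI empty_iff)
    qed
    have disj: "Cs!i \<inter> Cs!j = {}" if "i < k - 1" "j < k - 1" "i + 2 \<le> j" for i j
    proof (rule ccontr)
      assume "Cs!i \<inter> Cs!j \<noteq> {}"
      then obtain u where u: "u \<in> Cs!i" "u \<in> Cs!j" by blast
      have "c u = r - k + (i + 1) \<or> c u = r - k + (i + 2)" using colb[OF that(1) u(1)] .
      moreover have "c u = r - k + (j + 1) \<or> c u = r - k + (j + 2)" using colb[OF that(2) u(2)] .
      ultimately show False using col_arith[of "c u" "r - k" i j] that(3) by blast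
    qed
    have dist: "Cs!i \<noteq> Cs!j" if ij: "i < k - 1" "j < k - 1" "i < j" for i j
    proof
      assume eq: "Cs!i = Cs!j"
      obtain u where u: "u \<in> Cs!i" "c u = r - k + (i + 1)" using colex[OF ij(1)] by blast
      have "c u = r - k + (j + 1) \<or> c u = r - k + (j + 2)" using colb[OF ij(2), of u] eq u(1) by simp
      then show False using col_arith2[of "c u" "r - k" j i] u(2) ij(3) by blast
    qed
    have "induced Cs" unfolding induced_def
    proof (intro conjI allI impI)
      show "distinct Cs" unfolding distinct_conv_nth
      proof (intro allI impI)
        fix i j assume h: "i < length Cs" "j < length Cs" "i \<noteq> j"
        show "Cs ! i \<noteq> Cs ! j"
        proof (cases "i < j")
          case True then show ?thesis using dist[of i j] h len by simp
        next
          case False then have "j < i" using h by simp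
          then show ?thesis using dist[of j i] h len by simp
        qed
      qed
      fix i j assume ij: "i < length Cs" "j < length Cs"
      show "(Cs ! i \<inter> Cs ! j \<noteq> {}) = (i \<le> Suc j \<and> j \<le> Suc i)"
      proof (cases "i \<le> Suc j \<and> j \<le> Suc i")
        case True
        then consider "i = j" | "j = i + 1" | "i = j + 1" by linarith
        then show ?thesis
        proof cases
          case 1 then show ?thesis using Cne ij len by simp
        next
          case 2 then show ?thesis using adj[of i] ij len by simp
        next
          case 3 then show ?thesis using adj[of j] ij len by (simp add: Int_commute)
        qed
      next
        case False
        then have "i + 2 \<le> j \<or> j + 2 \<le> i" by linarith
        then show ?thesis
        proof
          assume "i + 2 \<le> j" then show ?thesis using disj[of i j] ij len False by simp
        next
          assume "j + 2 \<le> i" then show ?thesis using disj[of j i] ij len False by (simp add: Int_commute)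
        qed
      qed
    qed
    then show "Cs \<in> {xs. length xs = k - 1 \<and> set xs \<subseteq> E \<and> induced xs}" using len sE by simp
  qed
  show ?thesis
    by (rule le_trans[OF card_mono[OF _ sub] count_induced[OF fE]])
       (rule finite_subset[OF _ finite_lists_length_eq[OF fE, of "k - 1"]], auto)
qed

end
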